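(* Assume the setting in the context and suppose real numbers $L_{jk}\le U_{jk}$ ($j,k\in\{1,\dots,m\}$) satisfy $L_{jk}\le c^*_{jk}\le U_{jk}$ for all $j,k$, for the covariance matrix $\boldsymbol\Sigma^*=(c^*_{jk})=\mathbf M(\mathbf d^* )^{-1}$ of every $\Phi_{\mathfrak B}$-optimal design $\mathbf d^*$. Consider the mixed-integer linear program in variables $\varphi\in\mathbb R$, $z_{ijk}\in\mathbb R$ ($i\in\{1,\dots,n\}$, $j,k\in\{1,\dots,m\}$), symmetric $\boldsymbol\Sigma=(c_{jk})\in\mathbb R^{m\times m}$ and $\mathbf d\in\{0,1\}^n$: minimize $\varphi$ subject to $\varphi\ge\mathrm{tr}(\mathbf B_\ell'\boldsymbol\Sigma\mathbf B_\ell)$ for all $\ell\in\{1,\dots,K\}$; $\sum_{i=1}^n\mathbf f_i\mathbf f_i'\mathbf Z_i=\mathbf I_m$, where $\mathbf Z_i$ is the $m\times m$ matrix with entries $(\mathbf Z_i)_{jk}=z_{ijk}$; $\sum_i d_i=N$; and for all $i,j,k$: $z_{ijk}-d_iL_{jk}\ge0$, $z_{ijk}-d_iU_{jk}-c_{jk}+U_{jk}\ge0$, $z_{ijk}-d_iU_{jk}\le0$, $z_{ijk}-d_iL_{jk}-c_{jk}+L_{jk}\le0$. Then (i) every feasible point satisfies $z_{ijk}=d_ic_{jk}$ for all $i,j,k$, $\mathbf M(\mathbf d)$ is nonsingular and $\boldsymbol\Sigma=\mathbf M(\mathbf d)^{-1}$; and (ii) the optimal value of this program equals the minimum of $\Phi_{\mathfrak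 B}(\mathbf M(\mathbf d))$ over designs with nonsingular $\mathbf M(\mathbf d)$, and the set of $\mathbf d$-components of optimal solutions of the program is exactly the set of $\Phi_{\mathfrak B}$-optimal designs.
   Context: Let $n,m,N,K$ be positive integers with $2\le m\le N\le n$, and let $\mathbf f_1,\dots,\mathbf f_n\in\mathbb R^m$ span $\mathbb R^m$. A (binary) design is $\mathbf d\in\{0,1\}^n$ with $\sum_i d_i=N$; its information matrix is $\mathbf M(\mathbf d)=\sum_{i=1}^n d_i\mathbf f_i\mathbf f_i'$. For $\ell\in\{1,\dots,K\}$ let $\mathbf B_\ell$ be a real $m\times s_\ell$ matrix, $\mathbf B=(\mathbf B_1,\dots,\mathbf B_K)$, with column space of $\mathbf B$ equal to $\mathbb R^m$ and no zero column. For positive definite $\mathbf M$, $\Phi_{\mathfrak B}(\mathbf M)=\max_{\ell}\mathrm{tr}(\mathbf B_\ell'\mathbf M^{-1}\mathbf B_\ell)$. A $\Phi_{\mathfrak B}$-optimal design minimizes $\Phi_{\mathfrak B}(\mathbf M(\mathbf d))$ over designs $\mathbf d$ with nonsingular $\mathbf M(\mathbf d)$. *)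

theory Defs
  imports "HOL-Analysis.Analysis"
begin

text \<open>Design points are indexed by a finite type 'n (so n = CARD('n)), coordinates of
  R^m by a finite type 'm (so m = CARD('m)). The matrix B_l (l = 1..K) is given by its columns
  B l t, t < s l.\<close>

definition outer :: "real^'m \<Rightarrow> real^'m \<Rightarrow> real^'m^'m" where
  "outer u v = (\<chi> j k. u $ j * v $ k)"

definition info_matrix :: "('n::finite \<Rightarrow> real^'m) \<Rightarrow> ('n \<Rightarrow> real) \<Rightarrow> real^'m^'m" where
  "info_matrix f d = (\<Sum>i\<in>UNIV. d i *\<^sub>R outer (f i) (f i))"

definition is_design :: "nat \<Rightarrow> ('n::finite \<Rightarrow> real) \<Rightarrow> bool" where
  "is_design N d \<longleftrightarrow> (\<forall>i. d i \<in> {0, 1}) \<and> (\<Sum>i\<in>UNIV. d i) = real N"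

text \<open>tr(B_l' S B_l) = sum over the columns b of B_l of b' S b.\<close>
definition trBSB :: "(nat \<Rightarrow> nat \<Rightarrow> real^'m) \<Rightarrow> (nat \<Rightarrow> nat) \<Rightarrow> nat \<Rightarrow> real^'m^'m \<Rightarrow> real" where
  "trBSB B s l S = (\<Sum>t<s l. B l t \<bullet> (S *v B l t))"

definition PhiB :: "(nat \<Rightarrow> nat \<Rightarrow> real^'m) \<Rightarrow> (nat \<Rightarrow> nat) \<Rightarrow> nat \<Rightarrow> real^'m^'m \<Rightarrow> real" where
  "PhiB B s K M = Max {trBSB B s l (matrix_inv M) | l. l \<in> {1..K}}"

definition optimal_design ::
  "('n::finite \<Rightarrow> real^'m) \<Rightarrow> nat \<Rightarrow> (nat \<Rightarrow> nat \<Rightarrow> real^'m) \<Rightarrow> (nat \<Rightarrow> nat) \<Rightarrow> nat \<Rightarrow> ('n \<Rightarrow> real) \<Rightarrow> bool" where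
  "optimal_design f N B s K d \<longleftrightarrow> is_design N d \<and> invertible (info_matrix f d) \<and>
     (\<forall>d'. is_design N d' \<and> invertible (info_matrix f d') \<longrightarrow>
        PhiB B s K (info_matrix f d) \<le> PhiB B s K (info_matrix f d'))"

definition milp_feasible ::
  "('n::finite \<Rightarrow> real^'m) \<Rightarrow> nat \<Rightarrow> (nat \<Rightarrow> nat \<Rightarrow> real^'m) \<Rightarrow> (nat \<Rightarrow> nat) \<Rightarrow> nat \<Rightarrow>
   ('m \<Rightarrow> 'm \<Rightarrow> real) \<Rightarrow> ('m \<Rightarrow> 'm \<Rightarrow> real) \<Rightarrow>
   real \<Rightarrow> ('n \<Rightarrow> 'm \<Rightarrow> 'm \<Rightarrow> real) \<Rightarrow> real^'m^'m \<Rightarrow> ('n \<Rightarrow> real) \<Rightarrow> bool" where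
  "milp_feasible f N B s K L U \<phi> z \<Sigma> d \<longleftrightarrow>
     transpose \<Sigma> = \<Sigma> \<and> (\<forall>i. d i \<in> {0, 1}) \<and>
     (\<forall>l\<in>{1..K}. \<phi> \<ge> trBSB B s l \<Sigma>) \<and>
     (\<Sum>i\<in>UNIV. outer (f i) (f i) ** (\<chi> j k. z i j k)) = mat 1 \<and>
     (\<Sum>i\<in>UNIV. d i) = real N \<and>
     (\<forall>i j k. z i j k - d i * L j k \<ge> 0 \<and>
              z i j k - d i * U j k - \<Sigma> $ j $ k + U j k \<ge> 0 \<and>
              z i j k - d i * U j k \<le> 0 \<and>
              z i j k - d i * L j k - \<Sigma> $ j $ k + L j k \<le> 0)"

definition milp_optimal ::
  "('n::finite \<Rightarrow> real^'m) \<Rightarrow> nat \<Rightarrow> (nat \<Rightarrow> nat \<Rightarrow> real^'m) \<Rightarrow> (nat \<Rightarrow> nat) \<Rightarrow> nat \<Rightarrow>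
   ('m \<Rightarrow> 'm \<Rightarrow> real) \<Rightarrow> ('m \<Rightarrow> 'm \<Rightarrow> real) \<Rightarrow>
   real \<Rightarrow> ('n \<Rightarrow> 'm \<Rightarrow> 'm \<Rightarrow> real) \<Rightarrow> real^'m^'m \<Rightarrow> ('n \<Rightarrow> real) \<Rightarrow> bool" where
  "milp_optimal f N B s K L U \<phi> z \<Sigma> d \<longleftrightarrow>
     milp_feasible f N B s K L U \<phi> z \<Sigma> d \<and>
     (\<forall>\<phi>' z' \<Sigma>' d'. milp_feasible f N B s K L U \<phi>' z' \<Sigma>' d' \<longrightarrow> \<phi> \<le> \<phi>')"

definition milp_value ::
  "('n::finite \<Rightarrow> real^'m) \<Rightarrow> nat \<Rightarrow> (nat \<Rightarrow> nat \<Rightarrow> real^'m) \<Rightarrow> (nat \<Rightarrow> nat) \<Rightarrow> nat \<Rightarrow>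
   ('m \<Rightarrow> 'm \<Rightarrow> real) \<Rightarrow> ('m \<Rightarrow> 'm \<Rightarrow> real) \<Rightarrow> real" where
  "milp_value f N B s K L U = Inf {\<phi>. \<exists>z \<Sigma> d. milp_feasible f N B s K L U \<phi> z \<Sigma> d}"

end

theory Submission
  imports Defs
begin

lemma inv_props:
  fixes A :: "real^'m^'m"
  assumes "invertible A"
  shows "A ** matrix_inv A = mat 1 \<and> matrix_inv A ** A = mat 1"
  using assms unfolding invertible_def matrix_inv_def by (rule someI_ex)

lemma inv_unique:
  fixes A :: "real^'m::finite^'m"
  assumes "A ** S = mat 1"
  shows "invertible A" "S = matrix_inv A"
proof -
  show inv: "invertible A" using assms invertible_right_inverse by blast
  have "matrix_inv A = matrix_inv A ** (A ** S)" using assms by simp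
  also have "\<dots> = S" using inv_props[OF inv] by (simp add: matrix_mul_assoc)
  finally show "S = matrix_inv A" by simp
qed

lemma info_sym: "transpose (info_matrix f d) = info_matrix f d"
  by (simp add: vec_eq_iff transpose_def info_matrix_def outer_def mult.commute)

lemma inv_sym:
  fixes M :: "real^'m::finite^'m"
  assumes "transpose M = M" "invertible M"
  shows "transpose (matrix_inv M) = matrix_inv M"
proof -
  let ?S = "matrix_inv M"
  have 1: "M ** ?S = mat 1" "?S ** M = mat 1" using inv_props[OF assms(2)] by auto
  have "transpose ?S ** M = mat 1"
    using arg_cong[OF 1(1), of transpose] by (simp add: matrix_transpose_mul assms(1))
  hence "transpose ?S = transpose ?S ** (M ** ?S)" using 1 by simp
  also have "\<dots> = ?S" by (simp add: matrix_mul_assoc \<open>transpose ?S ** M = mat 1\<close>)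
  finally show ?thesis .
qed

lemma matrix_add_rdistrib_local: "(A + B) ** (C::real^'m::finite^'m) = A ** C + B ** C"
  by (simp add: vec_eq_iff matrix_matrix_mult_def sum.distrib algebra_simps)

lemma scal_v: "(c *\<^sub>R A) *v (x::real^'m::finite) = c *\<^sub>R (A *v x)"
  by (simp add: vec_eq_iff matrix_vector_mult_def sum_distrib_left mult_ac)

lemma msum_mult: "(\<Sum>i\<in>S. A i) ** (C::real^'m::finite^'m) = (\<Sum>i\<in>S. A i ** C)"
  by (induction S rule: infinite_finite_induct) (auto simp: matrix_add_rdistrib_local)

lemma vsum_mult: "(\<Sum>i\<in>S. A i) *v (x::real^'m::finite) = (\<Sum>i\<in>S. A i *v x)"
  by (induction S rule: infinite_finite_induct) (auto simp: matrix_vector_mult_add_rdistrib)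

lemma scal_mult: "(c *\<^sub>R A) ** (C::real^'m::finite^'m) = c *\<^sub>R (A ** C)"
  by (simp add: vec_eq_iff matrix_matrix_mult_def sum_distrib_left mult_ac)

lemma scal_mult2: "A ** (c *\<^sub>R C::real^'m::finite^'m) = c *\<^sub>R (A ** C)"
  by (simp add: vec_eq_iff matrix_matrix_mult_def sum_distrib_left mult_ac)

lemma sum_mult:
  "(\<Sum>i\<in>UNIV. outer (f i) (f i) ** (\<chi> j k. d i * S $ j $ k)) = info_matrix f d ** (S::real^'m::finite^'m)"
proof -
  have "(\<chi> j k. d i * S $ j $ k) = d i *\<^sub>R S" for i by (simp add: vec_eq_iff)
  thus ?thesis by (simp add: info_matrix_def msum_mult scal_mult scal_mult2)
qed

lemma outer_v: "outer u u *v x = (u \<bullet> x) *\<^sub>R (u::real^'m::finite)"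
  by (simp add: vec_eq_iff outer_def matrix_vector_mult_def inner_vec_def sum_distrib_left mult_ac)

lemma quad:
  fixes f :: "'n::finite \<Rightarrow> real^'m::finite"
  shows "x \<bullet> (info_matrix f d *v x) = (\<Sum>i\<in>UNIV. d i * (f i \<bullet> x)^2)"
  by (simp add: info_matrix_def vsum_mult scal_v outer_v inner_sum_right
     power2_eq_square inner_commute mult_ac)

lemma span_inv:
  fixes f :: "'n::finite \<Rightarrow> real^'m::finite"
  assumes sp: "span (f ` J) = UNIV"
  shows "invertible (info_matrix f (\<lambda>i. if i \<in> J then 1 else 0))"
proof -
  let ?d = "\<lambda>i. if i \<in> J then 1 else (0::real)"
  have "\<forall>x. info_matrix f ?d *v x = 0 \<longrightarrow> x = 0"
  proof (intro allI impI)
    fix x assume "info_matrix f ?d *v x = 0"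
    hence "(\<Sum>i\<in>UNIV. ?d i * (f i \<bullet> x)^2) = 0" using quad[of x f ?d] by simp
    hence "\<forall>i\<in>UNIV. ?d i * (f i \<bullet> x)^2 = 0"
      by (subst sum_nonneg_eq_0_iff[symmetric]) auto
    hence o: "\<And>y. y \<in> f ` J \<Longrightarrow> orthogonal x y"
      by (auto simp: orthogonal_def inner_commute) (metis one_neq_zero)
    have "orthogonal x x" using orthogonal_to_span[of x "f ` J" x] o sp by blast
    thus "x = 0" by (simp add: orthogonal_def)
  qed
  thus ?thesis using matrix_left_invertible_ker invertible_left_inverse by blast
qed

lemma exists_design:
  fixes f :: "'n::finite \<Rightarrow> real^'m::finite"
  assumes mN: "CARD('m) \<le> N" and Nn: "N \<le> CARD('n)" and fspan: "span (range f) = UNIV"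
  shows "\<exists>d. is_design N d \<and> invertible (info_matrix f d)"
proof -
  obtain Bs where Bs: "Bs \<subseteq> range f" "independent Bs" "range f \<subseteq> span Bs"
    using maximal_independent_subset by blast
  have spB: "span Bs = UNIV" using fspan Bs(3) span_mono[OF Bs(3)] by (auto simp: span_span)
  have fB: "finite Bs" "card Bs \<le> CARD('m)" using independent_bound[OF Bs(2)] by auto
  define I where "I = inv f ` Bs"
  have fI: "f ` I = Bs" unfolding I_def using Bs(1) by (force simp: image_image f_inv_into_f)
  have cI: "card I \<le> N" unfolding I_def using card_image_le[OF fB(1), of "inv f"] fB mN by linarith
  have "N - card I \<le> card (UNIV - I)" using Nn cI by (simp add: card_Diff_subset)
  then obtain T where T: "T \<subseteq> UNIV - I" "card T = N - card I" by (meson obtain_subset_with_card_n)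
  define J where "J = I \<union> T"
  have cJ: "card J = N" unfolding J_def using T cI
    by (subst card_Un_disjoint) auto
  have "span (f ` J) = UNIV" using spB fI span_mono[of "f ` I" "f ` J"] unfolding J_def by auto
  hence inv: "invertible (info_matrix f (\<lambda>i. if i \<in> J then 1 else 0))" by (rule span_inv)
  have "(\<Sum>i\<in>UNIV. if i \<in> J then 1 else 0::real) = real N"
    using cJ by (simp add: sum.If_cases)
  hence "is_design N (\<lambda>i. if i \<in> J then 1 else 0::real)" by (simp add: is_design_def)
  with inv show ?thesis by blast
qed

lemma finite_designs: "finite {d::'n::finite \<Rightarrow> real. \<forall>i. d i \<in> {0,1}}"
proof -
  have "{d::'n \<Rightarrow> real. \<forall>i. d i \<in> {0,1}} \<subseteq> (\<Pi>\<^sub>E i\<in>UNIV. {0,1})" by (auto simp: PiE_def)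
  moreover have "finite (\<Pi>\<^sub>E i\<in>(UNIV::'n set). {0::real,1})" by (rule finite_PiE) auto
  ultimately show ?thesis by (rule finite_subset)
qed

lemma PhiB_le:
  assumes "1 \<le> K"
  shows "PhiB B s K M \<le> \<phi> \<longleftrightarrow> (\<forall>l\<in>{1..K}. trBSB B s l (matrix_inv M) \<le> \<phi>)"
proof -
  have e: "{trBSB B s l (matrix_inv M) | l. l \<in> {1..K}} = (\<lambda>l. trBSB B s l (matrix_inv M)) ` {1..K}"
    by auto
  show ?thesis unfolding PhiB_def e using assms by (subst Max_le_iff) auto
qed

lemma feas_char:
  fixes f :: "'n::finite \<Rightarrow> real^'m::finite"
  assumes K: "1 \<le> K" and F: "milp_feasible f N B s K L U \<phi> z \<Sigma> d"
  shows "(\<forall>i j k. z i j k = d i * \<Sigma> $ j $ k) \<and> invertible (info_matrix f d) \<and>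
         \<Sigma> = matrix_inv (info_matrix f d) \<and> is_design N d \<and> PhiB B s K (info_matrix f d) \<le> \<phi>"
proof -
  have zz: "z i j k = d i * \<Sigma> $ j $ k" for i j k
  proof -
    have c: "z i j k - d i * L j k \<ge> 0" "z i j k - d i * U j k - \<Sigma> $ j $ k + U j k \<ge> 0"
      "z i j k - d i * U j k \<le> 0" "z i j k - d i * L j k - \<Sigma> $ j $ k + L j k \<le> 0"
      "d i \<in> {0,1}" using F unfolding milp_feasible_def by auto
    thus ?thesis by (cases "d i = 0") auto
  qed
  hence "(\<chi> j k. z i j k) = (\<chi> j k. d i * \<Sigma> $ j $ k)" for i by simp
  hence "info_matrix f d ** \<Sigma> = mat 1" using F unfolding milp_feasible_def by (simp add: sum_mult)
  note iu = inv_unique[OF this]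
  have "is_design N d" using F unfolding milp_feasible_def is_design_def by auto
  moreover have "PhiB B s K (info_matrix f d) \<le> \<phi>"
    using F iu(2)[symmetric] unfolding milp_feasible_def by (simp add: PhiB_le[OF K])
  ultimately show ?thesis using zz iu by auto
qed

lemma feas_of:
  fixes f :: "'n::finite \<Rightarrow> real^'m::finite"
  assumes K: "1 \<le> K" and D: "is_design N d" and I: "invertible (info_matrix f d)"
    and bd: "\<forall>j k. L j k \<le> matrix_inv (info_matrix f d) $ j $ k \<and>
               matrix_inv (info_matrix f d) $ j $ k \<le> U j k"
  shows "milp_feasible f N B s K L U (PhiB B s K (info_matrix f d))
           (\<lambda>i j k. d i * matrix_inv (info_matrix f d) $ j $ k) (matrix_inv (info_matrix f d)) d"
proof -
  let ?M = "info_matrix f d"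
  have "\<forall>i j k. d i * matrix_inv ?M $ j $ k - d i * L j k \<ge> 0 \<and>
       d i * matrix_inv ?M $ j $ k - d i * U j k - matrix_inv ?M $ j $ k + U j k \<ge> 0 \<and>
       d i * matrix_inv ?M $ j $ k - d i * U j k \<le> 0 \<and>
       d i * matrix_inv ?M $ j $ k - d i * L j k - matrix_inv ?M $ j $ k + L j k \<le> 0"
  proof (intro allI)
    fix i j k
    have "d i \<in> {0,1}" using D by (auto simp: is_design_def)
    thus "d i * matrix_inv ?M $ j $ k - d i * L j k \<ge> 0 \<and>
       d i * matrix_inv ?M $ j $ k - d i * U j k - matrix_inv ?M $ j $ k + U j k \<ge> 0 \<and>
       d i * matrix_inv ?M $ j $ k - d i * U j k \<le> 0 \<and>
       d i * matrix_inv ?M $ j $ k - d i * L j k - matrix_inv ?M $ j $ k + L j k \<le> 0"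
      using bd[rule_format, of j k] by auto
  qed
  moreover have "?M ** matrix_inv ?M = mat 1" using inv_props[OF I] by simp
  moreover have "transpose (matrix_inv ?M) = matrix_inv ?M" by (rule inv_sym[OF info_sym I])
  ultimately show ?thesis using D PhiB_le[OF K, of B s ?M "PhiB B s K ?M"]
    unfolding milp_feasible_def is_design_def by (simp add: sum_mult)
qed

theorem mainTheorem7:
  fixes f :: "'n::finite \<Rightarrow> real^'m::finite"
    and N K :: nat
    and B :: "nat \<Rightarrow> nat \<Rightarrow> real^'m"
    and s :: "nat \<Rightarrow> nat"
    and L U :: "'m \<Rightarrow> 'm \<Rightarrow> real"
  assumes m2: "2 \<le> CARD('m)"
    and mN: "CARD('m) \<le> N"
    and Nn: "N \<le> CARD('n)"
    and fspan: "span (range f) = UNIV"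
    and K1: "1 \<le> K"
    and s1: "\<forall>l\<in>{1..K}. 1 \<le> s l"
    and Bspan: "span {B l t | l t. l \<in> {1..K} \<and> t < s l} = UNIV"
    and Bnz: "\<forall>l\<in>{1..K}. \<forall>t<s l. B l t \<noteq> 0"
    and LU: "\<forall>j k. L j k \<le> U j k"
    and bounds: "\<forall>d. optimal_design f N B s K d \<longrightarrow>
        (\<forall>j k. L j k \<le> matrix_inv (info_matrix f d) $ j $ k \<and>
               matrix_inv (info_matrix f d) $ j $ k \<le> U j k)"
  shows "(\<forall>\<phi> z \<Sigma> d. milp_feasible f N B s K L U \<phi> z \<Sigma> d \<longrightarrow>
            (\<forall>i j k. z i j k = d i * \<Sigma> $ j $ k) \<and>
            invertible (info_matrix f d) \<and> \<Sigma> = matrix_inv (info_matrix f d))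
       \<and> (\<exists>\<phi> z \<Sigma> d. milp_optimal f N B s K L U \<phi> z \<Sigma> d)
       \<and> milp_value f N B s K L U =
           Min {PhiB B s K (info_matrix f d) | d. is_design N d \<and> invertible (info_matrix f d)}
       \<and> {d. \<exists>\<phi> z \<Sigma>. milp_optimal f N B s K L U \<phi> z \<Sigma> d} = {d. optimal_design f N B s K d}"
  proof -
  let ?D = "{d. is_design N d \<and> invertible (info_matrix f d)}"
  let ?g = "\<lambda>d. PhiB B s K (info_matrix f d)"
  have finD: "finite ?D" by (rule finite_subset[OF _ finite_designs]) (auto simp: is_design_def)
  have neD: "?D \<noteq> {}" using exists_design[OF mN Nn fspan] by auto
  define m where "m = Min (?g ` ?D)"
  have "m \<in> ?g ` ?D" unfolding m_def using finD neD by (intro Min_in) auto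
  then obtain ds where ds: "ds \<in> ?D" "?g ds = m" by auto
  have mle: "\<And>d. d \<in> ?D \<Longrightarrow> m \<le> ?g d" unfolding m_def using finD by auto
  have optds: "optimal_design f N B s K ds" using ds mle unfolding optimal_design_def by auto
  have feas_val: "m \<le> \<phi>'" if "milp_feasible f N B s K L U \<phi>' z' \<Sigma>' d'" for \<phi>' z' \<Sigma>' d'
    using feas_char[OF K1 that] mle[of d'] by fastforce
  have F0: "milp_feasible f N B s K L U m (\<lambda>i j k. ds i * matrix_inv (info_matrix f ds) $ j $ k)
      (matrix_inv (info_matrix f ds)) ds"
    using feas_of[OF K1, of N ds f L U B s] ds bounds optds by auto
  have P1: "\<forall>\<phi> z \<Sigma> d. milp_feasible f N B s K L U \<phi> z \<Sigma> d \<longrightarrow>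
            (\<forall>i j k. z i j k = d i * \<Sigma> $ j $ k) \<and>
            invertible (info_matrix f d) \<and> \<Sigma> = matrix_inv (info_matrix f d)"
    using feas_char[OF K1] by blast
  have P2: "milp_optimal f N B s K L U m (\<lambda>i j k. ds i * matrix_inv (info_matrix f ds) $ j $ k)
      (matrix_inv (info_matrix f ds)) ds"
    using F0 feas_val unfolding milp_optimal_def by blast
  have P3: "milp_value f N B s K L U = m"
    unfolding milp_value_def using F0 feas_val by (intro cInf_eq_minimum) auto
  have e: "{?g d | d. is_design N d \<and> invertible (info_matrix f d)} = ?g ` ?D" by auto
  have P4: "{d. \<exists>\<phi> z \<Sigma>. milp_optimal f N B s K L U \<phi> z \<Sigma> d} = {d. optimal_design f N B s K d}"
  proof (intro set_eqI iffI; simp)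
    fix d assume "\<exists>\<phi> z \<Sigma>. milp_optimal f N B s K L U \<phi> z \<Sigma> d"
    then obtain \<phi> z \<Sigma> where o: "milp_optimal f N B s K L U \<phi> z \<Sigma> d" by blast
    have c: "invertible (info_matrix f d)" "is_design N d" "?g d \<le> \<phi>"
      using feas_char[OF K1] o unfolding milp_optimal_def by blast+
    have "\<phi> \<le> m" using o F0 unfolding milp_optimal_def by blast
    thus "optimal_design f N B s K d" using c mle unfolding optimal_design_def by fastforce
  next
    fix d assume od: "optimal_design f N B s K d"
    hence dD: "d \<in> ?D" and dle: "\<And>d'. d' \<in> ?D \<Longrightarrow> ?g d \<le> ?g d'"
      unfolding optimal_design_def by auto
    have F: "milp_feasible f N B s K L U (?g d) (\<lambda>i j k. d i * matrix_inv (info_matrix f d) $ j $ k)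
      (matrix_inv (info_matrix f d)) d"
      using feas_of[OF K1, of N d f L U B s] dD bounds od by auto
    have "?g d \<le> \<phi>'" if "milp_feasible f N B s K L U \<phi>' z' \<Sigma>' d'" for \<phi>' z' \<Sigma>' d'
      using feas_char[OF K1 that] dle[of d'] by fastforce
    thus "\<exists>\<phi> z \<Sigma>. milp_optimal f N B s K L U \<phi> z \<Sigma> d"
      using F unfolding milp_optimal_def by blast
  qed
  show ?thesis
  proof (intro conjI)
    show "milp_value f N B s K L U =
           Min {PhiB B s K (info_matrix f d) | d. is_design N d \<and> invertible (info_matrix f d)}"
      unfolding e P3 m_def ..
  qed (use P1 P2 P4 in blast)+
qed

end
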